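(* For any nonempty configuration and any integer shift $G$, the inter-level sampler (Algorithm 1) terminates with probability $1$ and returns level $\ell$ with probability exactly $W_\ell/\sum_j W_j$.
   Context: Fix an integer $b\ge 2$. There is a set $\mathcal L$ of $N$ levels, which are consecutive integers. Each level $\ell$ holds a finite (possibly empty) multiset of normalized significands, each an integer in $[2^{b-1},2^b)$. Let $z$ be the total number of stored significands over all levels; assume $z<2^b$. For each level, $SS_\ell$ is the sum of its significands (so $SS_\ell=0$ iff the level is empty); set $SS_\ell=0$ for integers $\ell\notin\mathcal L$. The level weight is $W_\ell=SS_\ell2^\ell$. For an integer global shift $G$, $A_\ell(G)=\lfloor W_\ell2^G\rfloor+1$ if $SS_\ell>0$ and $A_\ell(G)=0$ if $SS_\ell=0$; $A(G)=\sum_\ell A_\ell(G)$ and $M(G)=\sum_\ell W_\ell2^G$. The configuration is nonempty if $z\ge1$. Inter-level sampler (Algorithm 1), with shift $G$ and $A=A(G)$: it performs independent outer iterations. In an outer iteration, draw $x$ uniformly from $\{1,\dots,A\}$ and scan the levels in decreasing order starting from the largest nonempty level. At the current level $\ell$: if $x<A_\ell(G)$, return $\ell$; if $x=A_\ell(G)$, run the refinement loop for $m=1,2,\dots$: draw $r$ uniformly from $\{0,\dots,2^b-1\}$ independently, let $t=\lfloor SS_\ell 2^{\ell+G+mb}\rfloor \bmod 2^b$; if $r<t$ return $\ell$; else if $r>t$ or $\ell+G+mb\ge 0$, abandon this outer iteration and start a new one; otherwise continue with $m+1$. If $x>A_\ell(G)$, set $x\leftarrow x-A_\ell(G)$ and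 move to the next lower level. *)

theory Defs
  imports "HOL-Probability.Probability"
begin

text \<open>A configuration: levels form the integer interval L = {lo..hi}; level l holds the
 multiset S l of normalized significands. Only the values of S on L matter.\<close>

definition SS :: "int \<Rightarrow> int \<Rightarrow> (int \<Rightarrow> nat multiset) \<Rightarrow> int \<Rightarrow> nat" where
  "SS lo hi S l = (if l \<in> {lo..hi} then sum_mset (S l) else 0)"

definition W :: "int \<Rightarrow> int \<Rightarrow> (int \<Rightarrow> nat multiset) \<Rightarrow> int \<Rightarrow> real" where
  "W lo hi S l = real (SS lo hi S l) * 2 powr real_of_int l"

definition Alev :: "int \<Rightarrow> int \<Rightarrow> (int \<Rightarrow> nat multiset) \<Rightarrow> int \<Rightarrow> int \<Rightarrow> int" where
  "Alev lo hi S G l = (if SS lo hi S l > 0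
      then \<lfloor>W lo hi S l * 2 powr real_of_int G\<rfloor> + 1 else 0)"

definition Atot :: "int \<Rightarrow> int \<Rightarrow> (int \<Rightarrow> nat multiset) \<Rightarrow> int \<Rightarrow> int" where
  "Atot lo hi S G = (\<Sum>l\<in>{lo..hi}. Alev lo hi S G l)"

definition top_level :: "int \<Rightarrow> int \<Rightarrow> (int \<Rightarrow> nat multiset) \<Rightarrow> int" where
  "top_level lo hi S = Max {l \<in> {lo..hi}. SS lo hi S l > 0}"

text \<open>Deterministic scan of one outer iteration over the levels (given in decreasing order).
 Result Some (l, False): return l; Some (l, True): run refinement at l.\<close>
fun scan :: "(int \<Rightarrow> int) \<Rightarrow> int list \<Rightarrow> int \<Rightarrow> (int \<times> bool) option" where
  "scan A [] x = None"
| "scan A (l # ls) x =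
     (if x < A l then Some (l, False)
      else if x = A l then Some (l, True)
      else scan A ls (x - A l))"

text \<open>Refinement loop at level l with sum SSl; Some l = return l, None = abandon the
 outer iteration.\<close>
partial_function (spmf) refine :: "nat \<Rightarrow> nat \<Rightarrow> int \<Rightarrow> int \<Rightarrow> nat \<Rightarrow> int option spmf" where
  "refine b SSl l G m =
     do { r \<leftarrow> spmf_of_set {0..<(2::nat)^b};
          let e = l + G + int m * int b;
          let t = nat (\<lfloor>real SSl * 2 powr real_of_int e\<rfloor> mod 2^b);
          if r < t then return_spmf (Some l)
          else if r > t \<or> e \<ge> 0 then return_spmf None
          else refine b SSl l G (Suc m) }"

text \<open>One outer iteration after drawing x. The case scan = None cannot occur for
 1 \<le> x \<le> A; it is modelled as divergence (no probability mass).\<close>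
definition iteration :: "nat \<Rightarrow> int \<Rightarrow> int \<Rightarrow> (int \<Rightarrow> nat multiset) \<Rightarrow> int \<Rightarrow> int \<Rightarrow> int option spmf" where
  "iteration b lo hi S G x =
     (case scan (Alev lo hi S G) (rev [lo..top_level lo hi S]) x of
        None \<Rightarrow> return_pmf None
      | Some (l, False) \<Rightarrow> return_spmf (Some l)
      | Some (l, True) \<Rightarrow> refine b (SS lo hi S l) l G 1)"

partial_function (spmf) sampler :: "nat \<Rightarrow> int \<Rightarrow> int \<Rightarrow> (int \<Rightarrow> nat multiset) \<Rightarrow> int \<Rightarrow> int spmf" where
  "sampler b lo hi S G =
     do { x \<leftarrow> spmf_of_set {1..Atot lo hi S G};
          res \<leftarrow> iteration b lo hi S G x;
          (case res of Some l \<Rightarrow> return_spmf l | None \<Rightarrow> sampler b lo hi S G) }"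

end

theory Submission
  imports Defs
begin

lemma sum_three:
  fixes a c d :: real
  assumes "t < N"
  shows "(\<Sum>r<N. if r < t then a else if t < r then c else d) = real t * a + real (N - Suc t) * c + d"
  using assms
proof (induction N)
  case 0 then show ?case by simp
next
  case (Suc N)
  show ?case
  proof (cases "t < N")
    case True
    with Suc show ?thesis by (simp add: Suc_diff_Suc algebra_simps)
  next
    case False
    then have tN: "t = N" using Suc by simp
    have "(\<Sum>r<N. if r < t then a else if t < r then c else d) = (\<Sum>r<N. a)"
      by (rule sum.cong) (auto simp: tN)
    then show ?thesis using tN by simp
  qed
qed

lemma frac_split:
  fixes z :: real and N :: int
  assumes "N > 0"
  shows "frac (z / N) = (real_of_int (\<lfloor>z\<rfloor> mod N) + frac z) / N"
proof -
  have i: "\<lfloor>z\<rfloor> = (\<lfloor>z\<rfloor> div N) * N + \<lfloor>z\<rfloor> mod N" by simp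
  have "real_of_int \<lfloor>z\<rfloor> = real_of_int (\<lfloor>z\<rfloor> div N) * real_of_int N + real_of_int (\<lfloor>z\<rfloor> mod N)"
    by (subst i) (simp only: of_int_add of_int_mult)
  then have z: "z = real_of_int (\<lfloor>z\<rfloor> div N) * N + real_of_int (\<lfloor>z\<rfloor> mod N) + frac z"
    unfolding frac_def by linarith
  have m0: "0 \<le> \<lfloor>z\<rfloor> mod N" "\<lfloor>z\<rfloor> mod N \<le> N - 1" using assms by auto
  have f: "0 \<le> frac z" "frac z < 1" by (auto simp: frac_lt_1)
  have "z / N - (real_of_int (\<lfloor>z\<rfloor> mod N) + frac z) / N = real_of_int (\<lfloor>z\<rfloor> div N)"
  proof -
    have "z / N - (real_of_int (\<lfloor>z\<rfloor> mod N) + frac z) / N = (z - (real_of_int (\<lfloor>z\<rfloor> mod N) + frac z)) / N"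
      by (simp add: diff_divide_distrib)
    also have "z - (real_of_int (\<lfloor>z\<rfloor> mod N) + frac z) = real_of_int (\<lfloor>z\<rfloor> div N) * N"
      using z by linarith
    finally show ?thesis using assms by simp
  qed
  moreover have "0 \<le> (real_of_int (\<lfloor>z\<rfloor> mod N) + frac z) / N"
    using m0 f assms by simp
  moreover have "(real_of_int (\<lfloor>z\<rfloor> mod N) + frac z) / N < 1"
  proof -
    have "real_of_int (\<lfloor>z\<rfloor> mod N) + frac z < N"
      using m0 f by linarith
    then show ?thesis using assms by simp
  qed
  ultimately show ?thesis by (simp add: frac_unique_iff)
qed

lemma frac_int_pow:
  assumes "e \<ge> 0"
  shows "frac (real n * 2 powr real_of_int e) = 0"
proof -
  have "2 powr real_of_int e = 2 ^ nat e" using assms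
    by (metis int_nat_eq of_int_of_nat_eq powr_realpow zero_less_numeral)
  then have "real n * 2 powr real_of_int e = of_int (int n * 2 ^ nat e)" by simp
  then show ?thesis by (metis Ints_of_int frac_eq_0_iff)
qed

lemma refine_prob:
  assumes b: "b \<ge> 1"
  shows "lossless_spmf (refine b SSl l G (Suc k)) \<and>
    spmf (refine b SSl l G (Suc k)) None = 1 - frac (real SSl * 2 powr real_of_int (l+G+int k*int b)) \<and>
    (\<forall>j. spmf (refine b SSl l G (Suc k)) (Some j) = (if j = l then frac (real SSl * 2 powr real_of_int (l+G+int k*int b)) else 0))"
proof (induction "nat (-(l + G + int (Suc k) * int b))" arbitrary: k rule: less_induct)
  case less
  define e where "e = l + G + int (Suc k) * int b"
  define z where "z = real SSl * 2 powr real_of_int e"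
  define N :: nat where "N = 2^b"
  define t where "t = nat (\<lfloor>z\<rfloor> mod 2^b)"
  define R where "R = refine b SSl l G (Suc (Suc k))"
  have N0: "N > 0" by (simp add: N_def)
  have tN: "t < N"
  proof -
    have "\<lfloor>z\<rfloor> mod 2^b < 2^b" by simp
    then show ?thesis unfolding t_def N_def
      by (metis nat_less_iff of_nat_numeral of_nat_power pos_mod_sign zero_less_numeral zero_less_power)
  qed
  have eq: "refine b SSl l G (Suc k) = spmf_of_set {0..<N} \<bind> (\<lambda>r. if r < t then return_spmf (Some l) else if t < r \<or> 0 \<le> e then return_spmf None else R)"
    by (subst refine.simps) (simp only: Let_def e_def t_def z_def N_def R_def)
  have IH: "lossless_spmf R \<and> spmf R None = 1 - frac z \<and> (\<forall>j. spmf R (Some j) = (if j = l then frac z else 0))"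
    if "e < 0"
  proof -
    have "nat (-(l + G + int (Suc (Suc k)) * int b)) < nat (-(l + G + int (Suc k) * int b))"
      using that b unfolding e_def by (simp add: algebra_simps)
    from less[OF this] show ?thesis unfolding R_def z_def e_def by simp
  qed
  have fz: "frac z = 0" if "0 \<le> e" using frac_int_pow[OF that] unfolding z_def .
  have y: "frac (real SSl * 2 powr real_of_int (l+G+int k*int b)) = (real t + frac z) / N"
  proof -
    have "real SSl * 2 powr real_of_int (l+G+int k*int b) = z / real_of_int (2^b)"
      unfolding z_def e_def by (simp add: algebra_simps powr_add powr_realpow)
    moreover have "real t = real_of_int (\<lfloor>z\<rfloor> mod 2^b)" unfolding t_def by simp
    ultimately show ?thesis using frac_split[of "2^b" z] by (simp add: N_def)
  qed
  have S: "spmf (refine b SSl l G (Suc k)) x = (real t * spmf (return_spmf (Some l)) x + real (N - Suc t) * spmf (return_spmf None) x + spmf (if 0 \<le> e then return_spmf None else R) x) / N" for x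
  proof -
    have "spmf (refine b SSl l G (Suc k)) x = (\<Sum>r\<in>{0..<N}. spmf (if r < t then return_spmf (Some l) else if t < r \<or> 0 \<le> e then return_spmf None else R) x) / N"
      unfolding eq spmf_bind integral_spmf_of_set by simp
    also have "(\<Sum>r\<in>{0..<N}. spmf (if r < t then return_spmf (Some l) else if t < r \<or> 0 \<le> e then return_spmf None else R) x)
       = (\<Sum>r<N. if r < t then spmf (return_spmf (Some l)) x else if t < r then spmf (return_spmf None) x else spmf (if 0 \<le> e then return_spmf None else R) x)"
      by (rule sum.cong) auto
    also have "\<dots> = real t * spmf (return_spmf (Some l)) x + real (N - Suc t) * spmf (return_spmf None) x + spmf (if 0 \<le> e then return_spmf None else R) x"
      by (rule sum_three[OF tN])
    finally show ?thesis .
  qed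
  have loss: "lossless_spmf (refine b SSl l G (Suc k))"
    unfolding eq using N0 IH by auto
  have Nt: "real (N - Suc t) + 1 = real N - real t" using tN by (simp add: of_nat_diff)
  show ?case
  proof (cases "0 \<le> e")
    case True
    have yy: "frac (real SSl * 2 powr real_of_int (l+G+int k*int b)) = real t / N"
      using y fz[OF True] by simp
    have "spmf (refine b SSl l G (Suc k)) None = (real (N - Suc t) + 1) / N"
      using S[of None] True by simp
    also have "\<dots> = 1 - real t / N" using Nt N0 by (simp add: field_simps)
    finally have n: "spmf (refine b SSl l G (Suc k)) None = 1 - real t / N" .
    have s: "spmf (refine b SSl l G (Suc k)) (Some j) = (if j = l then real t / N else 0)" for j
      using S[of "Some j"] True by simp
    show ?thesis using loss n s yy by simp
  next
    case False
    have n0: "spmf R None = 1 - frac z" and sj: "\<And>j. spmf R (Some j) = (if j = l then frac z else 0)"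
      using IH False by auto
    have "spmf (refine b SSl l G (Suc k)) None = (real (N - Suc t) + (1 - frac z)) / N"
      using S[of None] False n0 by simp
    also have "\<dots> = 1 - (real t + frac z) / N" using Nt N0 by (simp add: field_simps)
    finally have n: "spmf (refine b SSl l G (Suc k)) None = 1 - (real t + frac z) / N" .
    have s: "spmf (refine b SSl l G (Suc k)) (Some j) = (if j = l then (real t + frac z) / N else 0)" for j
      using S[of "Some j"] False sj by (simp add: add_divide_distrib)
    show ?thesis using loss n s y by simp
  qed
qed

lemma scan_sum:
  fixes h :: "(int \<times> bool) option \<Rightarrow> real"
  assumes "distinct ls" "\<forall>l\<in>set ls. A l \<ge> 0"
  shows "(\<Sum>x\<in>{1..sum_list (map A ls)}. h (scan A ls x)) =
     (\<Sum>l\<in>set ls. if A l \<ge> 1 then real_of_int (A l - 1) * h (Some (l,False)) + h (Some (l,True)) else 0)"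
  using assms
proof (induction ls)
  case Nil then show ?case by simp
next
  case (Cons l0 ls)
  define a where "a = A l0"
  define s where "s = sum_list (map A ls)"
  have a0: "a \<ge> 0" using Cons.prems a_def by simp
  have s0: "s \<ge> 0" unfolding s_def using Cons.prems by (intro sum_list_nonneg) auto
  have un: "{1..a+s} = {1..a} \<union> {a+1..a+s}" using a0 s0 by auto
  have "(\<Sum>x\<in>{1..a+s}. h (scan A (l0#ls) x)) = (\<Sum>x\<in>{1..a}. h (scan A (l0#ls) x)) + (\<Sum>x\<in>{a+1..a+s}. h (scan A (l0#ls) x))"
    unfolding un by (rule sum.union_disjoint) auto
  also have "(\<Sum>x\<in>{a+1..a+s}. h (scan A (l0#ls) x)) = (\<Sum>x\<in>{1..s}. h (scan A ls x))"
    by (rule sum.reindex_bij_witness[of _ "\<lambda>x. x + a" "\<lambda>x. x - a"]) (auto simp: a_def)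
  also have "\<dots> = (\<Sum>l\<in>set ls. if A l \<ge> 1 then real_of_int (A l - 1) * h (Some (l,False)) + h (Some (l,True)) else 0)"
    using Cons unfolding s_def by simp
  also have "(\<Sum>x\<in>{1..a}. h (scan A (l0#ls) x)) = (if a \<ge> 1 then real_of_int (a - 1) * h (Some (l0,False)) + h (Some (l0,True)) else 0)"
  proof (cases "a \<ge> 1")
    case True
    have un2: "{1..a} = insert a {1..a-1}" using True by auto
    have "(\<Sum>x\<in>{1..a}. h (scan A (l0#ls) x)) = h (scan A (l0#ls) a) + (\<Sum>x\<in>{1..a-1}. h (scan A (l0#ls) x))"
      unfolding un2 by (rule sum.insert) auto
    also have "(\<Sum>x\<in>{1..a-1}. h (scan A (l0#ls) x)) = (\<Sum>x\<in>{1..a-1}. h (Some (l0,False)))"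
      by (rule sum.cong) (auto simp: a_def)
    also have "\<dots> = real_of_int (a - 1) * h (Some (l0,False))" using True by simp
    finally show ?thesis using True by (simp add: a_def)
  next
    case False
    then have "a = 0" using a0 by simp
    then show ?thesis by simp
  qed
  finally show ?case using Cons.prems by (simp add: a_def s_def)
qed

lemma bind_two:
  fixes q :: "'a option spmf" and smp :: "'a spmf"
  assumes "lossless_spmf q"
  shows "spmf (q \<bind> (\<lambda>res. case res of None \<Rightarrow> smp | Some l \<Rightarrow> return_spmf l)) j = spmf q (Some j) + spmf smp j * spmf q None"
    and "weight_spmf (q \<bind> (\<lambda>res. case res of None \<Rightarrow> smp | Some l \<Rightarrow> return_spmf l)) = 1 + (weight_spmf smp - 1) * spmf q None"
proof -
  have e1: "(\<lambda>x. spmf (case x of None \<Rightarrow> smp | Some l \<Rightarrow> return_spmf l) j) = (\<lambda>x. indicator {Some j} x + spmf smp j * indicator {None} x)"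
    by (rule ext) (auto split: option.split)
  have ii: "integrable (measure_spmf q) (indicator A :: _ \<Rightarrow> real)" for A
    by (rule measure_spmf.integrable_const_bound[where B=1]) (auto simp: indicator_def)
  show "spmf (q \<bind> (\<lambda>res. case res of None \<Rightarrow> smp | Some l \<Rightarrow> return_spmf l)) j = spmf q (Some j) + spmf smp j * spmf q None"
    unfolding spmf_bind e1
    by (subst Bochner_Integration.integral_add) (auto simp: ii spmf_conv_measure_spmf)
  have e2: "(weight_spmf \<circ> (\<lambda>x. case x of None \<Rightarrow> smp | Some l \<Rightarrow> return_spmf l)) = (\<lambda>x. 1 + (weight_spmf smp - 1) * indicator {None} x)"
    by (rule ext) (auto split: option.split)
  have w: "measure (measure_spmf q) (space (measure_spmf q)) = 1"
    using assms unfolding lossless_spmf_def weight_spmf_def .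
  show "weight_spmf (q \<bind> (\<lambda>res. case res of None \<Rightarrow> smp | Some l \<Rightarrow> return_spmf l)) = 1 + (weight_spmf smp - 1) * spmf q None"
    unfolding weight_bind_spmf e2
    by (subst Bochner_Integration.integral_add) (auto simp: ii spmf_conv_measure_spmf w)
qed

lemma scan_notNone:
  "\<forall>l\<in>set ls. A l \<ge> 0 \<Longrightarrow> 1 \<le> x \<Longrightarrow> x \<le> sum_list (map A ls) \<Longrightarrow> scan A ls x \<noteq> None"
proof (induction ls arbitrary: x)
  case Nil then show ?case by simp
next
  case (Cons l0 ls)
  show ?case
  proof (cases "x \<le> A l0")
    case True then show ?thesis by auto
  next
    case False
    then have "scan A ls (x - A l0) \<noteq> None" using Cons by auto
    then show ?thesis using False by simp
  qed
qed

theorem mainTheorem3: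
  fixes b :: nat and lo hi G :: int and S :: "int \<Rightarrow> nat multiset"
  assumes "b \<ge> 2"
    and "\<forall>l\<in>{lo..hi}. \<forall>s\<in>#S l. 2^(b-1) \<le> s \<and> s < 2^b"
    and "(\<Sum>l\<in>{lo..hi}. size (S l)) < 2^b"
    and "(\<Sum>l\<in>{lo..hi}. size (S l)) \<ge> 1"
  shows "lossless_spmf (sampler b lo hi S G) \<and>
         (\<forall>l. spmf (sampler b lo hi S G) l = W lo hi S l / (\<Sum>j\<in>{lo..hi}. W lo hi S j))"
proof -
  define A where "A = Alev lo hi S G"
  define SSf where "SSf = SS lo hi S"
  define Wf where "Wf = W lo hi S"
  define top where "top = top_level lo hi S"
  define ls where "ls = rev [lo..top]"
  define Tt where "Tt = Atot lo hi S G"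
  define q where "q = spmf_of_set {1..Tt} \<bind> iteration b lo hi S G"
  define smp where "smp = sampler b lo hi S G"
  have b1: "b \<ge> 1" using assms(1) by simp
  obtain l0 where l0: "l0 \<in> {lo..hi}" "S l0 \<noteq> {#}"
  proof -
    have "\<not> (\<forall>l\<in>{lo..hi}. size (S l) = 0)"
    proof
      assume "\<forall>l\<in>{lo..hi}. size (S l) = 0"
      then have "(\<Sum>l\<in>{lo..hi}. size (S l)) = 0" by simp
      with assms(4) show False by simp
    qed
    then show ?thesis using that by auto
  qed
  have SS0: "SSf l0 > 0"
  proof -
    obtain s where s: "s \<in># S l0" using l0(2) by blast
    have "2^(b-1) \<le> s" using assms(2) l0(1) s by auto
    moreover have "(0::nat) < 2^(b-1)" by simp
    ultimately have sp: "s > 0" by linarith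
    have "sum_mset (S l0) = s + sum_mset (S l0 - {#s#})"
      using sum_mset.remove[OF s] by simp
    then show ?thesis using sp l0(1) unfolding SSf_def SS_def by simp
  qed
  define NE where "NE = {l \<in> {lo..hi}. SSf l > 0}"
  have NEf: "finite NE" "NE \<noteq> {}"
    unfolding NE_def using l0 SS0 by (auto intro: finite_subset[of _ "{lo..hi}"])
  have topNE: "top \<in> NE" unfolding top_def top_level_def NE_def[symmetric, unfolded SSf_def]
    using Max_in[OF NEf] unfolding NE_def SSf_def .
  have topge: "l \<le> top" if "l \<in> NE" for l
    unfolding top_def top_level_def using Max_ge[OF NEf(1) that] unfolding NE_def SSf_def .
  have top_in: "lo \<le> top" "top \<le> hi" "SSf top > 0" using topNE unfolding NE_def by auto
  have setls: "set ls = {lo..top}" and dls: "distinct ls" unfolding ls_def by auto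
  have SSout: "SSf l = 0" if "l \<notin> {lo..top}" for l
  proof (cases "l \<in> {lo..hi}")
    case True
    then have "l \<notin> NE" using that topge by fastforce
    then show ?thesis using True unfolding NE_def by simp
  next
    case False then show ?thesis unfolding SSf_def SS_def by auto
  qed
  have Wnn: "Wf l \<ge> 0" for l unfolding Wf_def W_def by simp
  have A0: "A l \<ge> 0" for l
    unfolding A_def Alev_def using Wnn[of l] unfolding Wf_def by auto
  have A1: "A l \<ge> 1 \<longleftrightarrow> SSf l > 0" for l
    unfolding A_def Alev_def SSf_def using Wnn[of l] unfolding Wf_def by auto
  have W0: "Wf l = 0" if "SSf l = 0" for l
  proof -
    have "real (SS lo hi S l) = 0" using that unfolding SSf_def by (simp only: of_nat_0)
    then show ?thesis unfolding Wf_def W_def by (simp only: mult_zero_left)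
  qed
  have key: "real_of_int (A l - 1) + frac (real (SSf l) * 2 powr real_of_int (l + G + int 0 * int b)) = Wf l * 2 powr G"
    if "SSf l > 0" for l
  proof -
    have "Wf l * 2 powr G = real (SSf l) * 2 powr real_of_int (l + G + int 0 * int b)"
      unfolding Wf_def W_def SSf_def by (simp add: powr_add)
    moreover have "A l - 1 = \<lfloor>Wf l * 2 powr G\<rfloor>"
      using that unfolding A_def Alev_def Wf_def SSf_def by simp
    ultimately show ?thesis by (simp add: frac_def)
  qed
  have Asum: "sum A {lo..top} = Tt"
  proof -
    have "sum A {lo..top} = sum A {lo..hi}"
      by (rule sum.mono_neutral_left) (use top_in SSout in \<open>auto simp: A_def Alev_def SSf_def\<close>)
    then show ?thesis unfolding Tt_def Atot_def A_def by simp
  qed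
  have Tls: "sum_list (map A ls) = Tt"
    using Asum sum_list_distinct_conv_sum_set[OF dls, of A] setls by simp
  have T1: "Tt \<ge> 1"
  proof -
    have "A top \<le> sum A {lo..top}"
      by (rule member_le_sum) (use A0 top_in in auto)
    moreover have "A top \<ge> 1" using A1[of top] top_in(3) by simp
    ultimately show ?thesis using Asum by linarith
  qed
  define h where "h = (\<lambda>y res. spmf (case res of None \<Rightarrow> return_pmf None
      | Some (l, False) \<Rightarrow> return_spmf (Some l) | Some (l, True) \<Rightarrow> refine b (SSf l) l G 1) y)"
  have it: "spmf (iteration b lo hi S G x) y = h y (scan A ls x)" for x y
    unfolding iteration_def h_def A_def ls_def top_def SSf_def
    by simp
  have qsum: "spmf q y = (\<Sum>l\<in>{lo..top}. if A l \<ge> 1 then real_of_int (A l - 1) * h y (Some (l,False)) + h y (Some (l,True)) else 0) / Tt" for y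
  proof -
    have "spmf q y = (\<Sum>x\<in>{1..Tt}. h y (scan A ls x)) / Tt"
      unfolding q_def spmf_bind integral_spmf_of_set it using T1 by simp
    also have "(\<Sum>x\<in>{1..Tt}. h y (scan A ls x)) = (\<Sum>l\<in>set ls. if A l \<ge> 1 then real_of_int (A l - 1) * h y (Some (l,False)) + h y (Some (l,True)) else 0)"
      using scan_sum[OF dls, of A "h y"] A0 Tls by simp
    finally show ?thesis using setls by simp
  qed
  have R: "lossless_spmf (refine b (SSf l) l G 1) \<and>
    spmf (refine b (SSf l) l G 1) None = 1 - frac (real (SSf l) * 2 powr real_of_int (l+G+int 0*int b)) \<and>
    (\<forall>j. spmf (refine b (SSf l) l G 1) (Some j) = (if j = l then frac (real (SSf l) * 2 powr real_of_int (l+G+int 0*int b)) else 0))" for l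
    using refine_prob[OF b1, of "SSf l" l G 0] by simp
  have pj: "spmf q (Some j) = Wf j * 2 powr G / Tt" for j
  proof -
    have "(\<Sum>l\<in>{lo..top}. if A l \<ge> 1 then real_of_int (A l - 1) * h (Some j) (Some (l,False)) + h (Some j) (Some (l,True)) else 0)
       = (\<Sum>l\<in>{lo..top}. if l = j then Wf l * 2 powr G else 0)"
    proof (rule sum.cong)
      fix l assume "l \<in> {lo..top}"
      show "(if A l \<ge> 1 then real_of_int (A l - 1) * h (Some j) (Some (l,False)) + h (Some j) (Some (l,True)) else 0)
         = (if l = j then Wf l * 2 powr G else 0)"
      proof (cases "A l \<ge> 1")
        case True
        then have SSp: "SSf l > 0" using A1 by simp
        have hF: "h (Some j) (Some (l,False)) = (if l = j then 1 else 0)" unfolding h_def by simp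
        have hT: "h (Some j) (Some (l,True)) = (if j = l then frac (real (SSf l) * 2 powr real_of_int (l+G+int 0*int b)) else 0)"
          unfolding h_def using R[of l] by simp
        show ?thesis using True key[OF SSp] hF hT by auto
      next
        case False
        then have "SSf l = 0" using A1[of l] by simp
        then show ?thesis using False W0[of l] by auto
      qed
    qed simp
    also have "\<dots> = Wf j * 2 powr G"
      using SSout[of j] W0[of j] by (auto simp: sum.delta')
    finally show ?thesis using qsum[of "Some j"] by simp
  qed
  define M where "M = (\<Sum>l\<in>{lo..top}. Wf l * 2 powr G)"
  have pN: "spmf q None = (Tt - M) / Tt"
  proof -
    have "(\<Sum>l\<in>{lo..top}. if A l \<ge> 1 then real_of_int (A l - 1) * h None (Some (l,False)) + h None (Some (l,True)) else 0)
       = (\<Sum>l\<in>{lo..top}. real_of_int (A l) - Wf l * 2 powr G)"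
    proof (rule sum.cong)
      fix l assume "l \<in> {lo..top}"
      have "A l = 0 \<or> A l \<ge> 1" using A0[of l] by linarith
      then show "(if A l \<ge> 1 then real_of_int (A l - 1) * h None (Some (l,False)) + h None (Some (l,True)) else 0)
         = real_of_int (A l) - Wf l * 2 powr G"
        using key[of l] A1[of l] W0[of l] R[of l] unfolding h_def by auto
    qed simp
    also have "\<dots> = Tt - M" unfolding M_def sum_subtractf using Asum
      by (metis of_int_sum)
    finally show ?thesis using qsum[of None] by simp
  qed
  have Msum: "M = 2 powr G * (\<Sum>j\<in>{lo..hi}. Wf j)"
  proof -
    have "(\<Sum>j\<in>{lo..hi}. Wf j) = (\<Sum>j\<in>{lo..top}. Wf j)"
      by (rule sum.mono_neutral_right) (use top_in SSout W0 in auto)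
    then show ?thesis unfolding M_def by (simp add: sum_distrib_right mult.commute)
  qed
  have Mpos: "M > 0"
  proof -
    have "Wf top * 2 powr G > 0" using top_in unfolding Wf_def W_def SSf_def by simp
    also have "Wf top * 2 powr G \<le> M" unfolding M_def
      by (rule member_le_sum) (use top_in Wnn in auto)
    finally show ?thesis .
  qed
  have lq: "lossless_spmf q"
    unfolding q_def
  proof (subst lossless_bind_spmf, intro conjI ballI)
    show "lossless_spmf (spmf_of_set {1..Tt})" using T1 by simp
  next
    fix x assume "x \<in> set_spmf (spmf_of_set {1..Tt})"
    then have x: "1 \<le> x" "x \<le> Tt" by auto
    have "scan A ls x \<noteq> None" using scan_notNone[of ls A x] A0 x Tls by simp
    then obtain l c where sc: "scan A ls x = Some (l, c)" by auto
    show "lossless_spmf (iteration b lo hi S G x)"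
      using sc R[of l] unfolding iteration_def A_def[symmetric] ls_def[symmetric] top_def[symmetric]
        SSf_def[symmetric]
      by (cases c) simp_all
  qed
  have eqs: "smp = q \<bind> (\<lambda>res. case res of None \<Rightarrow> smp | Some l \<Rightarrow> return_spmf l)"
    unfolding smp_def q_def by (rule trans[OF sampler.simps]) (simp add: bind_spmf_assoc Tt_def)
  have pNlt: "1 - spmf q None = M / Tt" using pN T1 by (simp add: field_simps)
  have pNlt1: "1 - spmf q None > 0" using pNlt Mpos T1 by simp
  have w: "weight_spmf smp = 1"
  proof -
    have "weight_spmf smp = 1 + (weight_spmf smp - 1) * spmf q None"
      using bind_two(2)[OF lq, of smp] eqs by simp
    then have "(weight_spmf smp - 1) * (1 - spmf q None) = 0" by (simp add: algebra_simps)
    then show ?thesis using pNlt1 by simp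
  qed
  have sj: "spmf smp j = Wf j / (\<Sum>j\<in>{lo..hi}. Wf j)" for j
  proof -
    have "spmf smp j = spmf q (Some j) + spmf smp j * spmf q None"
      using bind_two(1)[OF lq, of smp j] eqs by simp
    then have "spmf smp j * (1 - spmf q None) = spmf q (Some j)" by (simp add: algebra_simps)
    then have "spmf smp j = spmf q (Some j) / (1 - spmf q None)" using pNlt1 by (simp add: field_simps)
    also have "\<dots> = (Wf j * 2 powr G / Tt) / (M / Tt)" using pj pNlt by simp
    also have "\<dots> = Wf j / (\<Sum>j\<in>{lo..hi}. Wf j)" using Msum T1 by (simp add: field_simps)
    finally show ?thesis .
  qed
  show ?thesis using w sj unfolding lossless_spmf_def smp_def Wf_def by simp
qed

end
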